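(* Let $d > 3$ be odd. In the coefficient-choosing game of degree $d$ over $\mathbb{Z}/16\mathbb{Z}$, whichever player makes the last move has a winning strategy.
   Context: The coefficient-choosing game of degree $d$ over $R = \mathbb{Z}/16\mathbb{Z}$: Nora and Wanda alternately choose coefficients of $f(x) = a_d x^d + \cdots + a_0$; on each move the current player picks a not-yet-chosen coefficient and assigns it a value in $R$, subject to $a_d \neq 0$, $a_0 \neq 0$. After all $d+1$ coefficients are chosen, Wanda wins if $f$ has a root in $R$, and Nora wins otherwise. Who moves first is fixed in advance, which determines who makes the last move. *)

theory Defs
  imports Main "HOL-Library.Numeral_Type"
begin

text \<open>The ring R = Z/16Z is the numeral type 16 (a comm_ring_1 with 16 elements).
  A position of the game is a partial assignment of the coefficients a_0..a_d,
  represented as a map from indices to optional values in R.\<close>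

type_synonym position = "nat \<Rightarrow> 16 option"

definition legal_move :: "nat \<Rightarrow> position \<Rightarrow> nat \<Rightarrow> 16 \<Rightarrow> bool" where
  "legal_move d a i v \<longleftrightarrow> i \<le> d \<and> a i = None \<and> ((i = 0 \<or> i = d) \<longrightarrow> v \<noteq> 0)"

text \<open>Final outcome: f(x) = sum a_i x^i has a root in R (Wanda wins).\<close>
definition has_root :: "nat \<Rightarrow> position \<Rightarrow> bool" where
  "has_root d a \<longleftrightarrow> (\<exists>x::16. (\<Sum>i\<le>d. the (a i) * x ^ i) = 0)"

fun forces :: "(position \<Rightarrow> bool) \<Rightarrow> nat \<Rightarrow> nat \<Rightarrow> position \<Rightarrow> bool \<Rightarrow> bool" where
  "forces goal d 0 a t = goal a"
| "forces goal d (Suc n) a True =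
     (\<exists>i v. legal_move d a i v \<and> forces goal d n (a(i := Some v)) False)"
| "forces goal d (Suc n) a False =
     (\<forall>i v. legal_move d a i v \<longrightarrow> forces goal d n (a(i := Some v)) True)"

definition start :: position where "start = (\<lambda>_. None)"

definition wanda_wins :: "nat \<Rightarrow> bool \<Rightarrow> bool" where
  "wanda_wins d wanda_first = forces (has_root d) d (Suc d) start wanda_first"

definition nora_wins :: "nat \<Rightarrow> bool \<Rightarrow> bool" where
  "nora_wins d wanda_first = forces (\<lambda>a. \<not> has_root d a) d (Suc d) start (\<not> wanda_first)"

end

theory Submission
  imports Defs
begin

lemma all16: "(\<forall>x::16. P x) \<longleftrightarrow> P 0 \<and> P 1 \<and> P 2 \<and> P 3 \<and> P 4 \<and> P 5 \<and> P 6 \<and> P 7 \<and> P 8 \<and> P 9 \<and> P 10 \<and> P 11 \<and> P 12 \<and> P 13 \<and> P 14 \<and> P 15"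
proof
  assume H: "P 0 \<and> P 1 \<and> P 2 \<and> P 3 \<and> P 4 \<and> P 5 \<and> P 6 \<and> P 7 \<and> P 8 \<and> P 9 \<and> P 10 \<and> P 11 \<and> P 12 \<and> P 13 \<and> P 14 \<and> P 15"
  show "\<forall>x::16. P x"
  proof
    fix x :: 16
    obtain z where z: "x = of_int z" "0 \<le> z" "z < 16" by (cases x) auto
    have "z = 0 \<or> z = 1 \<or> z = 2 \<or> z = 3 \<or> z = 4 \<or> z = 5 \<or> z = 6 \<or> z = 7 \<or> z = 8 \<or> z = 9 \<or> z = 10 \<or> z = 11 \<or> z = 12 \<or> z = 13 \<or> z = 14 \<or> z = 15" using z by arith
    then show "P x" using H z(1) by auto
  qed
qed auto

lemma ex16: "(\<exists>x::16. P x) \<longleftrightarrow> P 0 \<or> P 1 \<or> P 2 \<or> P 3 \<or> P 4 \<or> P 5 \<or> P 6 \<or> P 7 \<or> P 8 \<or> P 9 \<or> P 10 \<or> P 11 \<or> P 12 \<or> P 13 \<or> P 14 \<or> P 15"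
  using all16[of "\<lambda>x. \<not> P x"] by blast

lemma par16: "\<exists>u::16. x = 2*u \<or> x = 2*u+1"
proof -
  have "\<forall>x::16. \<exists>u::16. x = 2*u \<or> x = 2*u+1" unfolding all16 ex16 by simp
  then show ?thesis by blast
qed

lemma odd_ne0: "2*u + 1 \<noteq> (0::16)"
proof -
  have "\<forall>u::16. 2*u + 1 \<noteq> 0" unfolding all16 by simp
  then show ?thesis by blast
qed

lemma S2: "v \<noteq> 0 \<Longrightarrow> v \<noteq> 4 \<Longrightarrow> v \<noteq> 8 \<Longrightarrow> v \<noteq> 12 \<Longrightarrow> v + 4*w \<noteq> (0::16)"
proof -
  have "\<forall>v w::16. v \<noteq> 0 \<longrightarrow> v \<noteq> 4 \<longrightarrow> v \<noteq> 8 \<longrightarrow> v \<noteq> 12 \<longrightarrow> v + 4*w \<noteq> 0" unfolding all16 by simp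
  then show "v \<noteq> 0 \<Longrightarrow> v \<noteq> 4 \<Longrightarrow> v \<noteq> 8 \<Longrightarrow> v \<noteq> 12 \<Longrightarrow> v + 4*w \<noteq> (0::16)" by blast
qed

lemma S3: "v = 4 \<or> v = 8 \<or> v = 12 \<Longrightarrow> (\<forall>y::16. v + 4*w*y^2 + 8*0*y^3 \<noteq> 0) \<or> (\<forall>y::16. v + 4*w*y^2 + 8*1*y^3 \<noteq> 0)"
proof -
  have "\<forall>w::16. (\<forall>y::16. 4 + 4*w*y^2 + 8*0*y^3 \<noteq> 0) \<or> (\<forall>y::16. 4 + 4*w*y^2 + 8*1*y^3 \<noteq> 0)"
    unfolding all16 by simp
  moreover have "\<forall>w::16. (\<forall>y::16. 8 + 4*w*y^2 + 8*0*y^3 \<noteq> 0) \<or> (\<forall>y::16. 8 + 4*w*y^2 + 8*1*y^3 \<noteq> 0)"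
    unfolding all16 by simp
  moreover have "\<forall>w::16. (\<forall>y::16. 12 + 4*w*y^2 + 8*0*y^3 \<noteq> 0) \<or> (\<forall>y::16. 12 + 4*w*y^2 + 8*1*y^3 \<noteq> 0)"
    unfolding all16 by simp
  ultimately show "v = 4 \<or> v = 8 \<or> v = 12 \<Longrightarrow> ?thesis" by blast
qed

lemma S4: "(v = 4 \<and> w = 0) \<or> (v = 8 \<and> w = 1) \<or> (v = 12 \<and> w = 0) \<Longrightarrow> v + 4*w*y^2 + 8*c*y^3 \<noteq> (0::16)"
proof -
  have "\<forall>c y::16. 4 + 4*0*y^2 + 8*c*y^3 \<noteq> 0" unfolding all16 by simp
  moreover have "\<forall>c y::16. 8 + 4*1*y^2 + 8*c*y^3 \<noteq> 0" unfolding all16 by simp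
  moreover have "\<forall>c y::16. 12 + 4*0*y^2 + 8*c*y^3 \<noteq> 0" unfolding all16 by simp
  ultimately show "(v = 4 \<and> w = 0) \<or> (v = 8 \<and> w = 1) \<or> (v = 12 \<and> w = 0) \<Longrightarrow> ?thesis" by blast
qed


definition free :: "nat \<Rightarrow> position \<Rightarrow> nat set" where
  "free d a = {i. i \<le> d \<and> a i = None}"

lemma finite_free: "finite (free d a)"
  unfolding free_def by (rule finite_subset[of _ "{..d}"]) auto

lemma free_upd: "i \<in> free d a \<Longrightarrow> free d (a(i := Some v)) = free d a - {i}"
  unfolding free_def by auto

lemma card_free_upd: "i \<in> free d a \<Longrightarrow> card (free d (a(i := Some v))) = card (free d a) - 1"
  by (simp add: free_upd finite_free)

lemma legal_free: "legal_move d a i v \<Longrightarrow> i \<in> free d a"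
  unfolding legal_move_def free_def by auto

lemma card_free_start: "card (free d start) = Suc d"
proof -
  have "free d start = {..d}" unfolding free_def start_def by auto
  then show ?thesis by simp
qed

lemma sum_upd:
  assumes "j \<le> d"
  shows "(\<Sum>i\<le>d. the ((a(j := Some v)) i) * x^i) = v * x^j + (\<Sum>i\<in>{..d}-{j}. the (a i) * x^i)"
proof -
  have "(\<Sum>i\<le>d. the ((a(j := Some v)) i) * x^i) = the ((a(j := Some v)) j) * x^j + (\<Sum>i\<in>{..d}-{j}. the ((a(j := Some v)) i) * x^i)"
    using assms by (subst sum.remove[of _ j]) auto
  also have "(\<Sum>i\<in>{..d}-{j}. the ((a(j := Some v)) i) * x^i) = (\<Sum>i\<in>{..d}-{j}. the (a i) * x^i)"
    by (rule sum.cong) auto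
  finally show ?thesis by simp
qed

lemma last_free:
  assumes "card (free d a) = Suc 0"
  obtains j where "free d a = {j}"
  using assms by (auto simp: card_Suc_eq)

definition bad :: "nat \<Rightarrow> position \<Rightarrow> nat" where
  "bad d a = card (free d a \<inter> {0, d})"

lemma bad_upd:
  assumes "i \<in> free d a"
  shows "bad d (a(i := Some v)) = (if i \<in> {0,d} then bad d a - 1 else bad d a)"
proof -
  have "free d (a(i := Some v)) \<inter> {0,d} = (free d a \<inter> {0,d}) - {i}"
    using free_upd[OF assms] by auto
  then show ?thesis unfolding bad_def using assms by (auto simp: card_Diff_singleton)
qed

lemma bad_le: "i \<in> free d a \<Longrightarrow> bad d (a(i := Some v)) \<le> bad d a"
  by (simp add: bad_upd)

lemma partA:
  assumes d0: "d \<noteq> 0"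
  shows "card (free d a) = n \<Longrightarrow>
     (odd n \<longrightarrow> bad d a \<le> n div 2 \<longrightarrow> forces (has_root d) d n a True) \<and>
     (even n \<longrightarrow> n > 0 \<longrightarrow> bad d a + 1 \<le> n div 2 \<longrightarrow> forces (has_root d) d n a False)"
proof (induction n arbitrary: a)
  case 0
  then show ?case by simp
next
  case (Suc m)
  show ?case
  proof (intro conjI impI)
    assume odd: "odd (Suc m)" and b: "bad d a \<le> Suc m div 2"
    show "forces (has_root d) d (Suc m) a True"
    proof (cases "m = 0")
      case True
      then obtain j where fj: "free d a = {j}" using Suc.prems last_free by metis
      have "bad d a = 0" using b True by simp
      then have "free d a \<inter> {0,d} = {}" unfolding bad_def using finite_free
        by (metis card_0_eq finite_Int)
      then have j0: "j \<noteq> 0" "j \<noteq> d" using fj by auto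
      have jf: "j \<in> free d a" using fj by auto
      then have jd: "j \<le> d" "a j = None" unfolding free_def by auto
      define v where "v = - (\<Sum>i\<in>{..d}-{j}. the (a i) * 1^i)"
      have leg: "legal_move d a j v" unfolding legal_move_def using jd j0 by auto
      have "has_root d (a(j := Some v))"
        unfolding has_root_def
        by (rule exI[of _ 1], subst sum_upd[OF jd(1)]) (simp add: v_def)
      then show ?thesis using leg True by auto
    next
      case False
      define i where "i = (if 0 \<in> free d a then 0 else if d \<in> free d a then d else (SOME i. i \<in> free d a))"
      have ne: "free d a \<noteq> {}" using Suc.prems by auto
      have ifree: "i \<in> free d a" unfolding i_def using ne by (auto intro: someI)
      have leg: "legal_move d a i 1" using ifree unfolding legal_move_def free_def by auto
      have c: "card (free d (a(i := Some 1))) = m" using card_free_upd[OF ifree] Suc.prems by simp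
      have "bad d (a(i := Some 1)) + 1 \<le> m div 2"
      proof (cases "i \<in> {0,d}")
        case True
        have "bad d a \<ge> 1" unfolding bad_def using True ifree finite_free
          by (metis IntI One_nat_def Suc_leI card_gt_0_iff empty_iff finite_Int)
        then show ?thesis using bad_upd[OF ifree, of 1] True b odd by auto
      next
        case False
        then have "0 \<notin> free d a" "d \<notin> free d a" unfolding i_def by (auto split: if_splits)
        then have "bad d a = 0" unfolding bad_def by (metis Int_insert_right_if0 Int_empty_right card.empty)
        moreover have "m \<ge> 2" using odd \<open>m \<noteq> 0\<close> by presburger
        ultimately show ?thesis using bad_upd[OF ifree, of 1] False by auto
      qed
      moreover have "even m" "m > 0" using odd False by auto
      ultimately have "forces (has_root d) d m (a(i := Some 1)) False"
        using Suc.IH[OF c] by blast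
      then show ?thesis using leg by auto
    qed
  next
    assume ev: "even (Suc m)" and "Suc m > 0" and b: "bad d a + 1 \<le> Suc m div 2"
    show "forces (has_root d) d (Suc m) a False"
    proof (simp, intro allI impI)
      fix i v assume leg: "legal_move d a i v"
      have ifree: "i \<in> free d a" using legal_free[OF leg] .
      have c: "card (free d (a(i := Some v))) = m" using card_free_upd[OF ifree] Suc.prems by simp
      have "bad d (a(i := Some v)) \<le> m div 2" using bad_le[OF ifree, of v] b ev by auto
      moreover have "odd m" using ev by auto
      ultimately show "forces (has_root d) d m (a(i := Some v)) True"
        using Suc.IH[OF c] by blast
    qed
  qed
qed


definition safe :: "position \<Rightarrow> bool" where
  "safe a = (\<forall>c::nat \<Rightarrow> 16. (\<forall>i v. a i = Some v \<longrightarrow> c i = v) \<longrightarrow>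
      (\<forall>y. c 0 + c 1 * (2*y) + c 2 * (2*y)^2 + c 3 * (2*y)^3 \<noteq> 0))"

lemma safe_upd: "safe a \<Longrightarrow> a i = None \<Longrightarrow> safe (a(i := Some v))"
  unfolding safe_def
proof (intro allI impI)
  fix c :: "nat \<Rightarrow> 16" and y
  assume s: "\<forall>c::nat \<Rightarrow> 16. (\<forall>i v. a i = Some v \<longrightarrow> c i = v) \<longrightarrow>
      (\<forall>y. c 0 + c 1 * (2*y) + c 2 * (2*y)^2 + c 3 * (2*y)^3 \<noteq> 0)"
    and n: "a i = None" and h: "\<forall>j w. (a(i := Some v)) j = Some w \<longrightarrow> c j = w"
  have "\<forall>j w. a j = Some w \<longrightarrow> c j = w" using h n by (metis fun_upd_other option.distinct(1))
  then show "c 0 + c 1 * (2*y) + c 2 * (2*y)^2 + c 3 * (2*y)^3 \<noteq> 0" using s by blast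
qed

lemma safeD: "safe a \<Longrightarrow> (\<And>i v. a i = Some v \<Longrightarrow> c i = v) \<Longrightarrow>
   c 0 + c 1 * (2*y) + c 2 * (2*y)^2 + c 3 * (2*y)^3 \<noteq> 0"
  unfolding safe_def by blast

lemma pow16: "(16::16) = 0" by simp

lemma even_pow0: "4 \<le> i \<Longrightarrow> (2*(y::16))^i = 0"
proof -
  assume "4 \<le> i"
  then obtain k where "i = 4 + k" by (metis le_add_diff_inverse)
  then have "(2*y)^i = 2^4 * (2^k * y^i)" by (simp add: power_mult_distrib power_add)
  also have "(2::16)^4 = 0" by simp
  finally show ?thesis by simp
qed

lemma even_sum:
  assumes "3 \<le> d"
  shows "(\<Sum>i\<le>d. c i * (2*(y::16))^i) = c 0 + c 1 * (2*y) + c 2 * (2*y)^2 + c 3 * (2*y)^3"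
proof -
  have "{..d} = {..3} \<union> {4..d}" using assms by auto
  then have "(\<Sum>i\<le>d. c i * (2*y)^i) = (\<Sum>i\<le>3. c i * (2*y)^i) + (\<Sum>i\<in>{4..d}. c i * (2*y)^i)"
    by (simp add: sum.union_disjoint)
  also have "(\<Sum>i\<in>{4..d}. c i * (2*y)^i) = 0" by (rule sum.neutral) (metis atLeastAtMost_iff even_pow0 mult_zero_right)
  also have "(\<Sum>i\<le>3::nat. c i * (2*y)^i) = c 0 + c 1 * (2*y) + c 2 * (2*y)^2 + c 3 * (2*y)^3"
    by (simp add: numeral_3_eq_3 atMost_Suc numeral_2_eq_2 algebra_simps)
  finally show ?thesis by simp
qed

lemma pow_odd: "\<exists>w. (2*y+1)^n = 1 + 2*(w::'a::comm_ring_1)"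
proof (induction n)
  case 0 then show ?case by (rule exI[of _ 0]) simp
next
  case (Suc n)
  then obtain w where "(2*y+1)^n = 1 + 2*w" by blast
  then have "(2*y+1)^Suc n = 1 + 2*(w + y + 2*y*w)" by (simp add: algebra_simps)
  then show ?case by blast
qed

lemma odd_sum: "\<exists>W. (\<Sum>i\<le>d. c i * (2*y+1)^i) = (\<Sum>i\<le>d. c i) + 2*(W::'a::comm_ring_1)"
proof (induction d)
  case 0 then show ?case by (rule exI[of _ 0]) simp
next
  case (Suc d)
  then obtain W where W: "(\<Sum>i\<le>d. c i * (2*y+1)^i) = (\<Sum>i\<le>d. c i) + 2*W" by blast
  obtain w where w: "(2*y+1)^Suc d = 1 + 2*w" using pow_odd by blast
  have "(\<Sum>i\<le>Suc d. c i * (2*y+1)^i) = (\<Sum>i\<le>Suc d. c i) + 2*(W + c (Suc d) * w)"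
    using W w by (simp add: algebra_simps)
  then show ?case by blast
qed

lemma final_noroot:
  assumes d3: "3 \<le> d" and s: "safe a" and u: "(\<Sum>i\<le>d. the (a i)) = 2*u+1"
  shows "\<not> has_root d a"
  unfolding has_root_def
proof
  assume "\<exists>x::16. (\<Sum>i\<le>d. the (a i) * x ^ i) = 0"
  then obtain x :: 16 where x: "(\<Sum>i\<le>d. the (a i) * x ^ i) = 0" by blast
  obtain y where "x = 2*y \<or> x = 2*y+1" using par16 by blast
  then show False
  proof
    assume "x = 2*y"
    then have "the (a 0) + the (a 1) * (2*y) + the (a 2) * (2*y)^2 + the (a 3) * (2*y)^3 = 0"
      using x even_sum[OF d3, of "\<lambda>i. the (a i)" y] by simp
    moreover have "the (a 0) + the (a 1) * (2*y) + the (a 2) * (2*y)^2 + the (a 3) * (2*y)^3 \<noteq> 0"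
      by (rule safeD[OF s]) simp
    ultimately show False by blast
  next
    assume "x = 2*y+1"
    obtain W where "(\<Sum>i\<le>d. the (a i) * (2*y+1)^i) = (\<Sum>i\<le>d. the (a i)) + 2*W"
      using odd_sum[where c="\<lambda>i. the (a i)" and y=y and d=d] by blast
    then have "(\<Sum>i\<le>d. the (a i)) + 2*W = 0" using x \<open>x = 2*y+1\<close> by simp
    then have "2*u+1 + 2*W = (0::16)" using u by simp
    moreover have "2*(u+W)+1 = 2*u+1+2*(W::16)" by (simp add: distrib_left)
    ultimately have "2*(u+W)+1 = (0::16)" by simp
    then show False using odd_ne0 by blast
  qed
qed

lemma partB:
  assumes d3: "3 \<le> d"
  shows "card (free d a) = n \<Longrightarrow> safe a \<Longrightarrow>
     (odd n \<longrightarrow> forces (\<lambda>b. \<not> has_root d b) d n a True) \<and>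
     (even n \<longrightarrow> n > 0 \<longrightarrow> forces (\<lambda>b. \<not> has_root d b) d n a False)"
proof (induction n arbitrary: a)
  case 0
  then show ?case by simp
next
  case (Suc m)
  show ?case
  proof (intro conjI impI)
    assume odd: "odd (Suc m)"
    show "forces (\<lambda>b. \<not> has_root d b) d (Suc m) a True"
    proof (cases "m = 0")
      case True
      then obtain j where fj: "free d a = {j}" using Suc.prems last_free by metis
      have jf: "j \<in> free d a" using fj by auto
      then have jd: "j \<le> d" "a j = None" unfolding free_def by auto
      define s where "s = (\<Sum>i\<in>{..d}-{j}. the (a i) * 1^i)"
      obtain u where "s = 2*u \<or> s = 2*u+1" using par16 by blast
      then obtain v u' where v: "v \<noteq> 0" "v + s = 2*u'+(1::16)"
      proof
        assume "s = 2*u"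
        then show ?thesis using that[of 1 u] by (simp add: algebra_simps)
      next
        assume "s = 2*u+1"
        then show ?thesis using that[of 2 "u+1"] by (simp add: algebra_simps)
      qed
      have leg: "legal_move d a j v" unfolding legal_move_def using jd v by auto
      have sum: "(\<Sum>i\<le>d. the ((a(j := Some v)) i)) = 2*u'+1"
        using sum_upd[OF jd(1), of a v 1] v(2) by (simp add: s_def)
      have "safe (a(j := Some v))" using safe_upd[OF Suc.prems(2) jd(2)] .
      then have "\<not> has_root d (a(j := Some v))" using final_noroot[OF d3 _ sum] by blast
      then show ?thesis using leg True by auto
    next
      case False
      define i where "i = (SOME i. i \<in> free d a)"
      have ne: "free d a \<noteq> {}" using Suc.prems by auto
      have ifree: "i \<in> free d a" unfolding i_def using ne by (auto intro: someI)
      have leg: "legal_move d a i 1" using ifree unfolding legal_move_def free_def by auto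
      have c: "card (free d (a(i := Some 1))) = m" using card_free_upd[OF ifree] Suc.prems by simp
      have sf: "safe (a(i := Some 1))" using safe_upd[OF Suc.prems(2)] ifree unfolding free_def by auto
      have "even m" "m > 0" using odd False by auto
      then have "forces (\<lambda>b. \<not> has_root d b) d m (a(i := Some 1)) False"
        using Suc.IH[OF c sf] by blast
      then show ?thesis using leg by auto
    qed
  next
    assume ev: "even (Suc m)" and "Suc m > 0"
    show "forces (\<lambda>b. \<not> has_root d b) d (Suc m) a False"
    proof (simp only: forces.simps, intro allI impI)
      fix i v assume leg: "legal_move d a i v"
      have ifree: "i \<in> free d a" using legal_free[OF leg] .
      have c: "card (free d (a(i := Some v))) = m" using card_free_upd[OF ifree] Suc.prems by simp
      have sf: "safe (a(i := Some v))" using safe_upd[OF Suc.prems(2)] ifree unfolding free_def by auto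
      have "odd m" using ev by auto
      then show "forces (\<lambda>b. \<not> has_root d b) d m (a(i := Some v)) True"
        using Suc.IH[OF c sf] by blast
    qed
  qed
qed


lemma safeI: "(\<And>c y. (\<And>i v. a i = Some v \<Longrightarrow> c i = v) \<Longrightarrow>
    c 0 + c 1 * (2*y) + c 2 * (2*y)^2 + c 3 * (2*y)^3 \<noteq> (0::16)) \<Longrightarrow> safe a"
  unfolding safe_def by blast

lemma E1: "c0 + c1*(2*y) + c2*(2*y)^2 + c3*(2*y)^3 = 2*(c1*y + 2*c2*y^2 + 4*c3*y^3) + (c0::'a::comm_ring_1)"
  by (simp add: power_mult_distrib algebra_simps)
lemma E2: "c0 + 0*(2*y) + c2*(2*y)^2 + c3*(2*y)^3 = c0 + 4*(c2*y^2 + 2*c3*y^3::'a::comm_ring_1)"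
  by (simp add: power_mult_distrib algebra_simps)
lemma E3: "c0 + 0*(2*y) + c2*(2*y)^2 + c3*(2*y)^3 = c0 + 4*c2*y^2 + 8*c3*(y::'a::comm_ring_1)^3"
  by (simp add: power_mult_distrib algebra_simps)

lemma odd_ne0': "2*u + 1 + 0 \<noteq> (0::16)" using odd_ne0 by simp

theorem lemma10:
  fixes d :: nat
  assumes "odd d" and "d > 3"
  shows "wanda_wins d False \<and> nora_wins d True"
proof
  have d5: "d \<ge> 5" using assms by presburger
  have d3: "3 \<le> d" using d5 by simp
  show "wanda_wins d False"
  proof -
    have "free d start \<inter> {0,d} = {0,d}" unfolding free_def start_def by auto
    then have "bad d start = 2" unfolding bad_def using d5 by simp
    moreover have "even (Suc d)" using assms by simp
    ultimately show ?thesis unfolding wanda_wins_def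
      using partA[of d start "Suc d"] card_free_start[of d] d5 by auto
  qed
  show "nora_wins d True"
  proof -
    define n0 where "n0 = d - 3"
    have Sd: "Suc d = Suc (Suc (Suc (Suc n0)))" using d5 unfolding n0_def by simp
    have en0: "even n0" "n0 > 0" using assms d5 unfolding n0_def by auto
    let ?G = "\<lambda>b. \<not> has_root d b"
    have "forces ?G d (Suc (Suc (Suc (Suc n0)))) start False"
    proof (subst forces.simps(3), intro allI impI)
      fix i v assume leg1: "legal_move d start i v"
      define a1 where "a1 = start(i := Some v)"
      have i1: "i \<in> free d start" using legal_free[OF leg1] .
      have c1: "card (free d a1) = d" unfolding a1_def using card_free_upd[OF i1] card_free_start by simp
      show "forces ?G d (Suc (Suc (Suc n0))) (start(i := Some v)) True"
      proof (cases "i = 0")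
        case False
        define a2 where "a2 = a1(0 := Some 1)"
        have leg: "legal_move d a1 0 1" unfolding legal_move_def a1_def start_def using False by auto
        have i2: "0 \<in> free d a1" using legal_free[OF leg] .
        have c2: "card (free d a2) = Suc (Suc n0)" unfolding a2_def using card_free_upd[OF i2] c1 d5 n0_def by simp
        have sf: "safe a2"
        proof (rule safeI)
          fix c :: "nat \<Rightarrow> 16" and y :: 16
          assume h: "\<And>i v. a2 i = Some v \<Longrightarrow> c i = v"
          have "c 0 = 1" using h[of 0 1] unfolding a2_def by simp
          then show "c 0 + c 1 * (2*y) + c 2 * (2*y)^2 + c 3 * (2*y)^3 \<noteq> 0"
            by (simp only: E1) (rule odd_ne0)
        qed
        have "forces ?G d (Suc (Suc n0)) a2 False" using partB[OF d3 c2 sf] en0(1) by (metis even_Suc_Suc_iff zero_less_Suc)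
        then show ?thesis using leg unfolding a2_def a1_def by (subst forces.simps(2)) blast
      next
        case True
        have v0: "v \<noteq> 0" using leg1 True unfolding legal_move_def by auto
        define a2 where "a2 = a1(1 := Some 0)"
        have leg: "legal_move d a1 1 0" unfolding legal_move_def a1_def start_def using True d5 by auto
        have i2: "1 \<in> free d a1" using legal_free[OF leg] .
        have c2: "card (free d a2) = Suc (Suc n0)" unfolding a2_def using card_free_upd[OF i2] c1 d5 n0_def by simp
        have a2_0: "a2 0 = Some v" "a2 1 = Some 0" unfolding a2_def a1_def using True by auto
        have "forces ?G d (Suc (Suc n0)) a2 False"
        proof (cases "v = 4 \<or> v = 8 \<or> v = 12")
          case False
          have sf: "safe a2"
          proof (rule safeI)
            fix c :: "nat \<Rightarrow> 16" and y :: 16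
            assume h: "\<And>i v. a2 i = Some v \<Longrightarrow> c i = v"
            have e: "c 0 = v" "c 1 = 0" using h a2_0 by auto
            have "v + 4*(c 2*y^2 + 2*c 3*y^3) \<noteq> 0" using S2 v0 False by blast
            then show "c 0 + c 1 * (2*y) + c 2 * (2*y)^2 + c 3 * (2*y)^3 \<noteq> 0"
              by (simp only: e E2 not_False_eq_True)
          qed
          show ?thesis using partB[OF d3 c2 sf] en0(1) by (metis even_Suc_Suc_iff zero_less_Suc)
        next
          case vcase: True
          show ?thesis
          proof (subst forces.simps(3), intro allI impI)
            fix i2 v2 assume leg2: "legal_move d a2 i2 v2"
            define a3 where "a3 = a2(i2 := Some v2)"
            have f2: "i2 \<in> free d a2" using legal_free[OF leg2] .
            have "a2 i2 = None" using f2 unfolding free_def by auto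
            then have i2n: "i2 \<noteq> 0" "i2 \<noteq> 1" using a2_0 by (metis option.distinct(1))+
            have c3: "card (free d a3) = Suc n0" unfolding a3_def using card_free_upd[OF f2] c2 by simp
            have a3_0: "a3 0 = Some v" "a3 1 = Some 0" unfolding a3_def using a2_0 i2n by auto
            show "forces ?G d (Suc n0) (a2(i2 := Some v2)) True"
            proof (cases "i2 = 2")
              case True
              define v3 where "v3 = (if (\<forall>y::16. v + 4*v2*y^2 + 8*0*y^3 \<noteq> 0) then 0 else (1::16))"
              have good: "\<forall>y::16. v + 4*v2*y^2 + 8*v3*y^3 \<noteq> 0"
                using S3[OF vcase, of v2] unfolding v3_def by auto
              define a4 where "a4 = a3(3 := Some v3)"
              have a33: "a3 3 = None" unfolding a3_def a2_def a1_def start_def using True \<open>i = 0\<close> by auto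
              have leg: "legal_move d a3 3 v3" unfolding legal_move_def using a33 d5 by auto
              have f3: "3 \<in> free d a3" using legal_free[OF leg] .
              have c4: "card (free d a4) = n0" unfolding a4_def using card_free_upd[OF f3] c3 by simp
              have sf: "safe a4"
              proof (rule safeI)
                fix c :: "nat \<Rightarrow> 16" and y :: 16
                assume h: "\<And>i v. a4 i = Some v \<Longrightarrow> c i = v"
                have e: "c 0 = v" "c 1 = 0" "c 2 = v2" "c 3 = v3"
                  using h a3_0 unfolding a4_def a3_def using True by auto
                have "v + 4*v2*y^2 + 8*v3*y^3 \<noteq> 0" using good by blast
                then show "c 0 + c 1 * (2*y) + c 2 * (2*y)^2 + c 3 * (2*y)^3 \<noteq> 0"
                  by (simp only: e E3 not_False_eq_True)
              qed
              have "forces ?G d n0 a4 False" using partB[OF d3 c4 sf] en0 by blast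
              then show ?thesis using leg unfolding a4_def a3_def by (subst forces.simps(2)) blast
            next
              case False
              define w where "w = (if v = 8 then 1 else (0::16))"
              define a4 where "a4 = a3(2 := Some w)"
              have a32: "a3 2 = None" unfolding a3_def a2_def a1_def start_def using False \<open>i = 0\<close> by auto
              have leg: "legal_move d a3 2 w" unfolding legal_move_def using a32 d5 by auto
              have f3: "2 \<in> free d a3" using legal_free[OF leg] .
              have c4: "card (free d a4) = n0" unfolding a4_def using card_free_upd[OF f3] c3 by simp
              have sf: "safe a4"
              proof (rule safeI)
                fix c :: "nat \<Rightarrow> 16" and y :: 16
                assume h: "\<And>i v. a4 i = Some v \<Longrightarrow> c i = v"
                have e: "c 0 = v" "c 1 = 0" "c 2 = w"
                  using h a3_0 unfolding a4_def by auto
                have "(v = 4 \<and> w = 0) \<or> (v = 8 \<and> w = 1) \<or> (v = 12 \<and> w = 0)"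
                  using vcase unfolding w_def by auto
                then have "v + 4*w*y^2 + 8*c 3*y^3 \<noteq> 0" by (rule S4)
                then show "c 0 + c 1 * (2*y) + c 2 * (2*y)^2 + c 3 * (2*y)^3 \<noteq> 0"
                  by (simp only: e E3 not_False_eq_True)
              qed
              have "forces ?G d n0 a4 False" using partB[OF d3 c4 sf] en0 by blast
              then show ?thesis using leg unfolding a4_def a3_def by (subst forces.simps(2)) blast
            qed
          qed
        qed
        then show ?thesis using leg unfolding a2_def a1_def by (subst forces.simps(2)) blast
      qed
    qed
    then show ?thesis unfolding nora_wins_def using Sd by simp
  qed
qed

end
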